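(* For every complex number $c\neq 0$ (with $\sinh c\ne 0$), $$-\frac{1}{\pi}\sum_{k=0}^{\infty}c^{2k+1}\sum_{j=1}^{k}\frac{(-1)^j(2\pi)^{-2j}}{(2k+1-2j)!}\zeta(2j+1)=\sinh(c)\int_{0}^{1}\left(\frac{\sinh(cu)}{\sinh c}-u\right)\cot(\pi u)\,du,$$ $$\frac{1}{\pi}\sum_{k=0}^{\infty}c^{2k+2}\sum_{j=1}^{k}\frac{(-1)^j(2\pi)^{-2j}}{(2k+2-2j)!}\zeta(2j+1)=(1-\cosh c)\int_{0}^{1}\left(\frac{\sinh(cu)}{\sinh c}-u\right)\cot(\pi u)\,du,$$ and consequently $$\frac{1}{\pi}\sum_{k=0}^{\infty}\sum_{j=1}^{k}(-1)^j(2\pi)^{-2j}\zeta(2j+1)\left(-\frac{c^{2k+1}}{(2k+1-2j)!}+\frac{c^{2k+2}}{(2k+2-2j)!}\right)=-(e^{-c}-1)\int_{0}^{1}\left(\frac{\sinh(cu)}{\sinh c}-u\right)\cot(\pi u)\,du.$$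
   Context: $\zeta$ is the Riemann zeta function. Empty inner sums (when $k=0$) are zero. *)

theory Defs
  imports "HOL-Analysis.Analysis"
begin

text \<open>Riemann zeta function, defined by its Dirichlet series
  (the defining series converges for Re s > 1; it is only used at s = 2j+1 with j \<ge> 1).\<close>
definition zeta :: "complex \<Rightarrow> complex" where
  "zeta s = (\<Sum>n. 1 / (of_nat (Suc n)) powr s)"

end

theory Submission
  imports Defs
begin


lemma jordan_aux:
  fixes x :: real assumes "0 \<le> x" "x \<le> pi"
  shows "x * cos x \<le> sin x"
proof -
  have "(\<lambda>x. sin x - x * cos x) 0 \<le> (\<lambda>x. sin x - x * cos x) x"
  proof (rule DERIV_nonneg_imp_increasing_open[OF assms(1)])
    fix y assume y: "0 < y" "y < x"
    show "\<exists>d. ((\<lambda>x. sin x - x * cos x) has_real_derivative d) (at y) \<and> 0 \<le> d"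
      apply (rule exI[of _ "y * sin y"])
      using y assms by (auto intro!: derivative_eq_intros mult_nonneg_nonneg sin_ge_zero)
  qed (intro continuous_intros)
  thus ?thesis by simp
qed

lemma jordan:
  fixes x :: real assumes "0 \<le> x" "x \<le> pi/2"
  shows "2 / pi * x \<le> sin x"
proof (cases "x = 0")
  case True thus ?thesis by simp
next
  case False
  hence xp: "x > 0" using assms by simp
  have "(\<lambda>t. sin t / t) x \<ge> (\<lambda>t. sin t / t) (pi/2)"
  proof (rule DERIV_nonpos_imp_decreasing_open[OF assms(2)])
    fix y assume y: "x < y" "y < pi/2"
    hence yp: "y > 0" using xp by simp
    have "y * cos y \<le> sin y" using jordan_aux[of y] y yp by simp
    thus "\<exists>d. ((\<lambda>t. sin t / t) has_real_derivative d) (at y) \<and> d \<le> 0"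
      apply (intro exI[of _ "(cos y * y - sin y) / y^2"])
      using yp by (auto intro!: derivative_eq_intros simp: power2_eq_square divide_nonpos_pos algebra_simps)
  next
    show "continuous_on {x..pi/2} (\<lambda>t. sin t / t)"
      using xp by (intro continuous_intros) auto
  qed
  hence "2 / pi \<le> sin x / x" by simp
  thus ?thesis using xp by (simp add: field_simps)
qed

lemma sin_lb:
  fixes u :: real assumes "0 \<le> u" "u \<le> 1"
  shows "2 * u * (1 - u) \<le> sin (pi * u)"
proof (cases "u \<le> 1/2")
  case True
  have "2 / pi * (pi * u) \<le> sin (pi * u)" using assms True by (intro jordan) auto
  hence "2 * u \<le> sin (pi * u)" by simp
  moreover have "2 * u * (1 - u) \<le> 2 * u" using assms by (simp add: mult_left_le)
  ultimately show ?thesis by linarith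
next
  case False
  have "2 / pi * (pi * (1 - u)) \<le> sin (pi * (1 - u))" using assms False by (intro jordan) auto
  also have "sin (pi * (1 - u)) = sin (pi * u)" by (simp add: right_diff_distrib sin_diff)
  finally have "2 * (1 - u) \<le> sin (pi * u)" by simp
  moreover have "u * (2 * (1 - u)) \<le> 1 * (2 * (1 - u))" by (rule mult_right_mono) (use assms in auto)
  hence "2 * u * (1 - u) \<le> 2 * (1 - u)" by (simp add: algebra_simps)
  ultimately show ?thesis by linarith
qed

lemma fbound:
  fixes u :: real assumes "0 \<le> u" "u \<le> 1" "n \<ge> 1"
  shows "\<bar>(u ^ n - u) * cot (pi * u)\<bar> \<le> real n"
proof (cases "u = 0 \<or> u = 1")
  case True thus ?thesis by auto
next
  case False
  hence u: "0 < u" "u < 1" using assms by auto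
  have s: "2 * u * (1 - u) \<le> sin (pi * u)" using sin_lb assms by simp
  have sp: "sin (pi * u) > 0" using u by (intro sin_gt_zero) auto
  have "1 + real (n - 1) * (u - 1) \<le> (1 + (u - 1)) ^ (n - 1)"
    by (rule Bernoulli_inequality) (use u in auto)
  hence b: "1 - u ^ (n - 1) \<le> real (n - 1) * (1 - u)" by (simp add: algebra_simps)
  have un: "u ^ n = u * u ^ (n - 1)" using assms(3) by (metis Suc_diff_1 less_le_trans zero_less_one power_Suc)
  have le1: "u ^ (n - 1) \<le> 1" using u by (simp add: power_le_one)
  have "\<bar>u ^ n - u\<bar> = u * (1 - u ^ (n - 1))" using un le1 u by (simp add: algebra_simps abs_if mult_left_le)
  also have "\<dots> \<le> u * (real (n - 1) * (1 - u))" using b u by (intro mult_left_mono) auto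
  finally have A: "\<bar>u ^ n - u\<bar> \<le> real (n - 1) * (u * (1 - u))" by (simp add: algebra_simps)
  have B: "\<bar>cot (pi * u)\<bar> \<le> 1 / sin (pi * u)"
    using sp by (simp add: cot_def abs_divide divide_right_mono)
  have "\<bar>(u ^ n - u) * cot (pi * u)\<bar> \<le> (real (n - 1) * (u * (1 - u))) * (1 / sin (pi * u))"
    unfolding abs_mult by (intro mult_mono A B) (use u in auto)
  also have "\<dots> = real (n - 1) / 2 * (2 * u * (1 - u) / sin (pi * u))" by simp
  also have "\<dots> \<le> real (n - 1) / 2 * 1"
    using s sp u by (intro mult_left_mono) auto
  also have "\<dots> \<le> real n" by simp
  finally show ?thesis .
qed


lemma geom_sin_sums:
  fixes r t :: real assumes "0 \<le> r" "r < 1"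
  shows "(\<lambda>k. r ^ k * sin (real k * t)) sums (r * sin t / (1 - 2 * r * cos t + r^2))"
proof -
  define z where "z = rcis r t"
  have nz: "norm z < 1" using assms by (simp add: z_def)
  have "(\<lambda>k. Im (z ^ k)) sums Im (1 / (1 - z))"
    using sums_Im[OF geometric_sums[OF nz]] .
  moreover have "Im (z ^ k) = r ^ k * sin (real k * t)" for k
    by (simp add: z_def DeMoivre2)
  moreover have "Im (1 / (1 - z)) = r * sin t / (1 - 2 * r * cos t + r^2)"
  proof -
    have "(1 - r * cos t)^2 + (r * sin t)^2 = 1 - 2 * r * cos t + r^2 * (sin t ^ 2 + cos t ^ 2)"
      by algebra
    also have "\<dots> = 1 - 2 * r * cos t + r^2" by simp
    finally show ?thesis by (simp add: Im_divide z_def)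
  qed
  ultimately show ?thesis by simp
qed

definition Pk :: "real \<Rightarrow> real \<Rightarrow> real" where
  "Pk r u = 2 * r * sin (2 * pi * u) / (1 - 2 * r * cos (2 * pi * u) + r^2)"

lemma Pk_denom:
  fixes r x :: real
  shows "1 - 2 * r * cos (2 * x) + r^2 = (1 - r)^2 + 4 * r * sin x ^ 2"
  using cos_double_sin[of x] by algebra

lemma Pk_denom_pos:
  fixes r u :: real assumes "0 \<le> r" "r < 1"
  shows "1 - 2 * r * cos (2 * pi * u) + r^2 > 0"
proof -
  have e: "1 - 2 * r * cos (2 * (pi * u)) + r^2 = (1 - r)^2 + 4 * r * sin (pi * u) ^ 2" by (rule Pk_denom)
  have a: "(1 - r)^2 > 0" using assms by simp
  have b: "4 * r * sin (pi * u) ^ 2 \<ge> 0" using assms by simp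
  have "2 * pi * u = 2 * (pi * u)" by simp
  thus ?thesis using e a b by (simp only:)
qed

lemma Pk_bound:
  fixes r u :: real assumes "0 < r" "r < 1" "0 < u" "u < 1"
  shows "\<bar>Pk r u\<bar> \<le> \<bar>cot (pi * u)\<bar>"
proof -
  define s where "s = sin (pi * u)"
  define c where "c = cos (pi * u)"
  have sp: "s > 0" unfolding s_def using assms by (intro sin_gt_zero) auto
  have D: "1 - 2 * r * cos (2 * pi * u) + r^2 = (1 - r)^2 + 4 * r * s ^ 2"
    using Pk_denom[of r "pi * u"] by (simp add: s_def mult.assoc)
  have N: "2 * r * sin (2 * pi * u) = 4 * r * s * c"
    using sin_double[of "pi * u"] by (simp add: s_def c_def mult.assoc)
  have Dp: "(1 - r)^2 + 4 * r * s ^ 2 \<ge> 4 * r * s^2" by simp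
  have pos: "4 * r * s^2 > 0" using sp assms by simp
  have pos2: "(1 - r)^2 + 4 * r * s^2 > 0" using pos Dp by linarith
  have "\<bar>Pk r u\<bar> = 4 * r * s * \<bar>c\<bar> / ((1 - r)^2 + 4 * r * s ^ 2)"
    unfolding Pk_def D N using assms sp pos by (simp add: abs_mult abs_divide)
  also have "\<dots> \<le> 4 * r * s * \<bar>c\<bar> / (4 * r * s^2)"
    using pos pos2 sp assms by (intro divide_left_mono mult_pos_pos) auto
  also have "\<dots> = \<bar>c\<bar> / s" using sp assms by (simp add: power2_eq_square field_simps)
  also have "\<dots> = \<bar>cot (pi * u)\<bar>" using sp by (simp add: cot_def c_def s_def abs_divide)
  finally show ?thesis .
qed

definition rr :: "nat \<Rightarrow> real" where "rr m = 1 - inverse (real (Suc m)) / 2"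

lemma rr_bounds: "0 < rr m" "rr m < 1"
proof -
  have "inverse (real (Suc m)) \<le> 1" by (simp add: inverse_eq_divide)
  moreover have "inverse (real (Suc m)) > 0" by simp
  ultimately show "0 < rr m" "rr m < 1" by (auto simp: rr_def)
qed

lemma rr_lim: "rr \<longlonglongrightarrow> 1"
proof -
  have "(\<lambda>m. 1 - inverse (real (Suc m)) / 2) \<longlonglongrightarrow> 1 - 0 / 2"
    by (intro tendsto_intros LIMSEQ_inverse_real_of_nat) auto
  thus ?thesis by (simp add: rr_def[abs_def])
qed

lemma Pk_lim:
  fixes u :: real assumes "0 < u" "u < 1"
  shows "(\<lambda>m. Pk (rr m) u) \<longlonglongrightarrow> cot (pi * u)"
proof -
  define s where "s = sin (pi * u)"
  define c where "c = cos (pi * u)"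
  have sp: "s > 0" unfolding s_def using assms by (intro sin_gt_zero) auto
  have D: "1 - 2 * 1 * cos (2 * pi * u) + 1^2 = 4 * s ^ 2"
    using Pk_denom[of 1 "pi * u"] by (simp add: s_def mult.assoc)
  have "(\<lambda>m. Pk (rr m) u) \<longlonglongrightarrow> 2 * 1 * sin (2 * pi * u) / (1 - 2 * 1 * cos (2 * pi * u) + 1^2)"
    unfolding Pk_def using D sp by (intro tendsto_intros rr_lim) auto
  also have "2 * 1 * sin (2 * pi * u) / (1 - 2 * 1 * cos (2 * pi * u) + 1^2) = cot (pi * u)"
    unfolding D using sin_double[of "pi * u"] sp
    by (simp add: s_def c_def cot_def mult.assoc power2_eq_square field_simps)
  finally show ?thesis .
qed


lemma ftc01:
  fixes F f :: "real \<Rightarrow> real"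
  assumes "\<And>x. (F has_real_derivative f x) (at x)"
  shows "(f has_integral (F 1 - F 0)) {0..1}"
  by (rule fundamental_theorem_of_calculus)
     (auto simp: has_real_derivative_iff_has_vector_derivative[symmetric]
           intro: has_field_derivative_at_within assms)

definition Acl :: "real \<Rightarrow> nat \<Rightarrow> real" where
  "Acl a m = - (\<Sum>j<(m+1) div 2. (-1)^j * fact m / (fact (m - 2*j) * a^(2*j+1)))"

lemma Acl_rec:
  assumes "a \<noteq> 0"
  shows "Acl a (Suc (Suc p)) = -1/a - real ((p+2)*(p+1)) / a^2 * Acl a p"
proof -
  define f where "f m j = ((-1)^j * fact m / (fact (m - 2*j) * a^(2*j+1)) :: real)" for m j
  have idx: "(Suc (Suc p) + 1) div 2 = Suc ((p + 1) div 2)" by simp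
  have "Acl a (Suc (Suc p)) = - (\<Sum>j<Suc ((p + 1) div 2). f (Suc (Suc p)) j)"
    unfolding Acl_def f_def idx ..
  also have "\<dots> = - (f (Suc (Suc p)) 0 + (\<Sum>j<(p + 1) div 2. f (Suc (Suc p)) (Suc j)))"
    by (subst sum.lessThan_Suc_shift) simp
  also have "f (Suc (Suc p)) 0 = 1 / a" by (simp add: f_def)
  also have "f (Suc (Suc p)) (Suc j) = - (real ((p+2)*(p+1)) / a^2) * f p j" for j
  proof -
    have "fact (Suc (Suc p) - 2 * Suc j) = (fact (p - 2*j) :: real)" by simp
    moreover have "(fact (Suc (Suc p)) :: real) = real ((p+2)*(p+1)) * fact p"
      by (simp add: algebra_simps)
    ultimately show ?thesis using assms
      by (simp add: f_def field_simps power_add power2_eq_square)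
  qed
  hence "(\<Sum>j<(p + 1) div 2. f (Suc (Suc p)) (Suc j)) = - (real ((p+2)*(p+1)) / a^2) * (\<Sum>j<(p + 1) div 2. f p j)"
    by (simp add: sum_distrib_left)
  finally show ?thesis unfolding Acl_def f_def by simp
qed

lemma d_pow_cos:
  "((\<lambda>u::real. u^(Suc n) * cos (a*u)) has_real_derivative
     (real (Suc n) * u^n * cos (a*u) - u^(Suc n) * (a * sin (a*u)))) (at u)"
  by (rule DERIV_cong, rule derivative_eq_intros DERIV_pow refl | simp)+

lemma d_pow_sin:
  "((\<lambda>u::real. u^(Suc n) * sin (a*u)) has_real_derivative
     (real (Suc n) * u^n * sin (a*u) + u^(Suc n) * (a * cos (a*u)))) (at u)"
  by (rule DERIV_cong, rule derivative_eq_intros DERIV_pow refl | simp)+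

lemma Acl_has_integral:
  assumes a: "a \<noteq> 0" "sin a = 0" "cos a = 1"
  shows "((\<lambda>u. u^m * sin (a*u)) has_integral Acl a m) {0..1}"
proof (induction m rule: nat_less_induct)
  case (1 m)
  show ?case
  proof (cases m)
    case 0
    have "((\<lambda>u. sin (a*u)) has_integral ((\<lambda>u. - cos (a*u) / a) 1 - (\<lambda>u. - cos (a*u) / a) 0)) {0..1}"
      by (rule ftc01) (use a in \<open>auto intro!: derivative_eq_intros\<close>)
    thus ?thesis using 0 a by (simp add: Acl_def)
  next
    case (Suc q)
    show ?thesis
    proof (cases q)
      case 0
      let ?F = "\<lambda>u. - (u * cos (a*u)) / a + sin (a*u) / a^2"
      have "((\<lambda>u. u * sin (a*u)) has_integral (?F 1 - ?F 0)) {0..1}"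
        by (rule ftc01) (use a in \<open>auto intro!: derivative_eq_intros simp: field_simps power2_eq_square\<close>)
      thus ?thesis using Suc 0 a by (simp add: Acl_def)
    next
      case (Suc p)
      hence m: "m = Suc (Suc p)" using \<open>m = Suc q\<close> by simp
      let ?c = "real ((p+2)*(p+1)) / a^2"
      let ?F = "\<lambda>u. - (u^(Suc (Suc p)) * cos (a*u)) / a + real (p+2) * (u^(Suc p) * sin (a*u)) / a^2"
      have d: "(?F has_real_derivative (u^(p+2) * sin (a*u) + ?c * (u^p * sin (a*u)))) (at u)" for u
      proof -
        have "(?F has_real_derivative
                 (- (real (Suc (Suc p)) * u^(Suc p) * cos (a*u) - u^(Suc (Suc p)) * (a * sin (a*u))) / a
                  + real (p+2) * (real (Suc p) * u^p * sin (a*u) + u^(Suc p) * (a * cos (a*u))) / a^2)) (at u)"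
          by (intro DERIV_add DERIV_cdivide DERIV_minus DERIV_cmult d_pow_cos d_pow_sin)
        moreover have "- (real (Suc (Suc p)) * u^(Suc p) * cos (a*u) - u^(Suc (Suc p)) * (a * sin (a*u))) / a
                  + real (p+2) * (real (Suc p) * u^p * sin (a*u) + u^(Suc p) * (a * cos (a*u))) / a^2
               = u^(p+2) * sin (a*u) + ?c * (u^p * sin (a*u))"
          using a by (simp add: field_simps power2_eq_square)
        ultimately show ?thesis by simp
      qed
      have I1: "((\<lambda>u. u^(p+2) * sin (a*u) + ?c * (u^p * sin (a*u))) has_integral (?F 1 - ?F 0)) {0..1}"
        by (rule ftc01[OF d])
      have I2: "((\<lambda>u. ?c * (u^p * sin (a*u))) has_integral ?c * Acl a p) {0..1}"
        using 1 m by (intro has_integral_mult_right) auto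
      have "((\<lambda>u. u^(p+2) * sin (a*u)) has_integral (?F 1 - ?F 0) - ?c * Acl a p) {0..1}"
        using has_integral_diff[OF I1 I2] by simp
      moreover have "(?F 1 - ?F 0) - ?c * Acl a p = Acl a m"
        using a m Acl_rec[OF a(1), of p] by simp
      ultimately show ?thesis using m by simp
    qed
  qed
qed



definition dco :: "nat \<Rightarrow> nat \<Rightarrow> real" where
  "dco n j = - ((-1)^j * fact n / (fact (n - 2*j) * (2*pi)^(2*j+1)))"

definition Sk :: "nat \<Rightarrow> nat \<Rightarrow> real" where
  "Sk n k = (\<Sum>j=1..(n-1) div 2. dco n j * inverse (real k ^ (2*j+1)))"

lemma s_formula:
  assumes n: "n \<ge> 1"
  shows "((\<lambda>u. (u^n - u) * sin (real k * (2*pi*u))) has_integral Sk n k) {0..1}"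
proof (cases "k = 0")
  case True
  thus ?thesis by (simp add: Sk_def)
next
  case False
  define a where "a = 2 * pi * real k"
  have a2: "a = real (2*k) * pi" by (simp add: a_def)
  have a: "a \<noteq> 0" "sin a = 0" "cos a = 1" using False
    by (auto simp: a2 cos_npi simp del: of_nat_mult)
  have eq: "(\<lambda>u. (u^n - u) * sin (real k * (2*pi*u))) = (\<lambda>u. u^n * sin (a*u) - u^1 * sin (a*u))"
    by (auto simp: a_def algebra_simps)
  have I: "((\<lambda>u. (u^n - u) * sin (real k * (2*pi*u))) has_integral (Acl a n - Acl a 1)) {0..1}"
    unfolding eq by (intro has_integral_diff Acl_has_integral a)
  define f where "f j = ((-1)^j * fact n / (fact (n - 2*j) * a^(2*j+1)) :: real)" for j
  have N: "(n+1) div 2 = Suc ((n-1) div 2)" using n by auto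
  have "Acl a n = - (\<Sum>j<Suc ((n-1) div 2). f j)" unfolding Acl_def f_def N ..
  also have "(\<Sum>j<Suc ((n-1) div 2). f j) = f 0 + (\<Sum>j<(n-1) div 2. f (Suc j))"
    by (rule sum.lessThan_Suc_shift)
  also have "(\<Sum>j<(n-1) div 2. f (Suc j)) = (\<Sum>j=1..(n-1) div 2. f j)"
    using sum.atLeast1_atMost_eq[of f "(n-1) div 2"] by (simp only: One_nat_def)
  also have "f 0 = 1 / a" by (simp add: f_def)
  finally have An: "Acl a n = - (1/a + (\<Sum>j=1..(n-1) div 2. f j))" .
  have A1: "Acl a 1 = - (1/a)" by (simp add: Acl_def)
  have "Acl a n - Acl a 1 = - (\<Sum>j=1..(n-1) div 2. f j)" using An A1 by linarith
  also have "\<dots> = (\<Sum>j=1..(n-1) div 2. - f j)" by (rule sum_negf[symmetric])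
  also have "\<dots> = Sk n k" unfolding Sk_def
  proof (intro sum.cong refl)
    fix j
    show "- f j = dco n j * inverse (real k ^ (2*j+1))"
    proof -
      have "a^(2*j+1) = (2*pi)^(2*j+1) * real k^(2*j+1)" unfolding a_def by (simp add: power_mult_distrib)
      have g: "\<And>x y p q :: real. -(x / (y * (p * q))) = -(x/(y*p)) * inverse q"
        by (simp add: divide_inverse mult_ac)
      show ?thesis unfolding f_def dco_def \<open>a^(2*j+1) = _\<close> by (rule g)
    qed
  qed
  finally show ?thesis using I by simp
qed

lemma fn_abs_le1:
  fixes u :: real assumes "0 \<le> u" "u \<le> 1"
  shows "\<bar>u^n - u\<bar> \<le> 1"
proof -
  have "0 \<le> u^n" "u^n \<le> 1" using assms by (auto simp: power_le_one)
  thus ?thesis using assms by linarith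
qed

lemma kernel_series:
  fixes r :: real assumes n: "n \<ge> 1" and r: "0 < r" "r < 1"
  shows "(\<lambda>k. r^k * (2 * Sk n k)) sums integral {0..1} (\<lambda>u. (u^n - u) * Pk r u)"
proof -
  define F where "F N u = (\<Sum>k<N. r^k * (2 * ((u^n - u) * sin (real k * (2*pi*u)))))" for N u
  have cont: "continuous_on {0..1} (\<lambda>u. (u^n - u) * sin (real k * (2*pi*u)))" for k
    by (intro continuous_intros)
  have intF: "F N integrable_on {0..1}" for N
    unfolding F_def by (intro integrable_sum integrable_continuous_interval continuous_intros) auto
  have intFv: "integral {0..1} (F N) = (\<Sum>k<N. r^k * (2 * Sk n k))" for N
  proof -
    have "integral {0..1} (F N) = (\<Sum>k<N. integral {0..1} (\<lambda>u. r^k * (2 * ((u^n - u) * sin (real k * (2*pi*u))))))"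
      unfolding F_def by (intro integral_sum integrable_continuous_interval continuous_intros) auto
    also have "\<dots> = (\<Sum>k<N. r^k * (2 * Sk n k))"
      using s_formula[OF n] by (intro sum.cong refl) (simp add: integral_unique)
    finally show ?thesis .
  qed
  have hint: "(\<lambda>u::real. 2 / (1 - r)) integrable_on {0..1}" by (rule integrable_continuous_interval) (intro continuous_intros)
  have le: "norm (F N u) \<le> 2 / (1 - r)" if u: "u \<in> {0..1}" for N u
    proof -
      have "norm (F N u) \<le> (\<Sum>k<N. norm (r^k * (2 * ((u^n - u) * sin (real k * (2*pi*u))))))"
        unfolding F_def by (rule norm_sum)
      also have "\<dots> \<le> (\<Sum>k<N. r^k * 2)"
      proof (intro sum_mono)
        fix k
        have "\<bar>u^n - u\<bar> * \<bar>sin (real k * (2*pi*u))\<bar> \<le> 1 * 1"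
          using fn_abs_le1[of u n] u by (intro mult_mono) auto
        thus "norm (r^k * (2 * ((u^n - u) * sin (real k * (2*pi*u))))) \<le> r^k * 2"
          using r by (simp add: abs_mult)
      qed
      also have "\<dots> = (\<Sum>k<N. r^k) * 2" by (rule sum_distrib_right[symmetric])
      also have "(\<Sum>k<N. r^k) = (1 - r^N) / (1 - r)" using r by (simp add: sum_gp_strict)
      also have "(1 - r^N) / (1 - r) \<le> 1 / (1 - r)"
        using r by (intro divide_right_mono) auto
      finally show ?thesis by simp
    qed
  have conv: "(\<lambda>N. F N u) \<longlonglongrightarrow> (u^n - u) * Pk r u" if "u \<in> {0..1}" for u
    proof -
      have "(\<lambda>k. (2 * (u^n - u)) * (r^k * sin (real k * (2*pi*u)))) sums
              ((2 * (u^n - u)) * (r * sin (2*pi*u) / (1 - 2 * r * cos (2*pi*u) + r^2)))"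
        using r by (intro sums_mult geom_sin_sums) auto
      hence "(\<lambda>N. \<Sum>k<N. (2 * (u^n - u)) * (r^k * sin (real k * (2*pi*u)))) \<longlonglongrightarrow>
              ((2 * (u^n - u)) * (r * sin (2*pi*u) / (1 - 2 * r * cos (2*pi*u) + r^2)))"
        by (simp add: sums_def)
      moreover have "(\<lambda>N. \<Sum>k<N. (2 * (u^n - u)) * (r^k * sin (real k * (2*pi*u)))) = (\<lambda>N. F N u)"
        unfolding F_def by (intro ext sum.cong refl) (simp add: mult_ac)
      moreover have "(2 * (u^n - u)) * (r * sin (2*pi*u) / (1 - 2 * r * cos (2*pi*u) + r^2)) = (u^n - u) * Pk r u"
      proof -
        have g: "\<And>x y z D::real. 2 * x * (y * z / D) = x * (2 * y * z / D)" by simp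
        show ?thesis unfolding Pk_def by (rule g)
      qed
      ultimately show ?thesis by simp
    qed
  have "(\<lambda>N. integral {0..1} (F N)) \<longlonglongrightarrow> integral {0..1} (\<lambda>u. (u^n - u) * Pk r u)"
    by (rule dominated_convergence(2)[OF intF hint le conv])
  thus ?thesis unfolding sums_def intFv .
qed

lemma Pk_cont: assumes "0 \<le> r" "r < 1" shows "continuous_on {0..1} (Pk r)"
proof -
  have "continuous_on {0..1} (\<lambda>u. 2 * r * sin (2 * pi * u) / (1 - 2 * r * cos (2 * pi * u) + r^2))"
  proof (intro continuous_intros ballI)
    fix u assume "u \<in> {0..1::real}"
    show "1 - 2 * r * cos (2 * pi * u) + r^2 \<noteq> 0" using Pk_denom_pos[OF assms, of u] by linarith
  qed
  moreover have "Pk r = (\<lambda>u. 2 * r * sin (2 * pi * u) / (1 - 2 * r * cos (2 * pi * u) + r^2))"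
    by (rule ext) (simp only: Pk_def)
  ultimately show ?thesis by (simp only:)
qed

lemma kernel_limit:
  assumes n: "n \<ge> 1"
  shows "(\<lambda>u. (u^n - u) * cot (pi * u)) integrable_on {0..1} \<and>
         (\<lambda>m. integral {0..1} (\<lambda>u. (u^n - u) * Pk (rr m) u)) \<longlonglongrightarrow>
            integral {0..1} (\<lambda>u. (u^n - u) * cot (pi * u))"
proof -
  have fint: "(\<lambda>u. (u^n - u) * Pk (rr m) u) integrable_on {0..1}" for m
  proof (rule integrable_continuous_interval, rule continuous_on_mult)
    show "continuous_on {0..1} (\<lambda>u::real. u^n - u)" by (intro continuous_intros)
    show "continuous_on {0..1} (\<lambda>u. Pk (rr m) u)" using Pk_cont[of "rr m"] rr_bounds[of m] by simp
  qed
  have hint: "(\<lambda>u::real. real n) integrable_on {0..1}" by (rule integrable_continuous_interval) (intro continuous_intros)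
  have le: "norm ((u^n - u) * Pk (rr m) u) \<le> real n" if u: "u \<in> {0..1}" for m u
  proof (cases "u = 0 \<or> u = 1")
    case True thus ?thesis using n by (elim disjE) (simp_all add: power_0_left)
  next
    case False
    hence u': "0 < u" "u < 1" using u by auto
    have "\<bar>(u^n - u) * Pk (rr m) u\<bar> \<le> \<bar>(u^n - u) * cot (pi * u)\<bar>"
      unfolding abs_mult using Pk_bound[OF rr_bounds u'] by (intro mult_left_mono) simp_all
    also have "\<dots> \<le> real n" using fbound[of u n] u n by simp
    finally show ?thesis by simp
  qed
  have conv: "(\<lambda>m. (u^n - u) * Pk (rr m) u) \<longlonglongrightarrow> (u^n - u) * cot (pi * u)" if u: "u \<in> {0..1}" for u
  proof (cases "u = 0 \<or> u = 1")
    case True thus ?thesis using n by (elim disjE) (simp_all add: power_0_left)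
  next
    case False
    hence u': "0 < u" "u < 1" using u by auto
    show ?thesis by (intro tendsto_intros Pk_lim u')
  qed
  show ?thesis using dominated_convergence[OF fint hint le conv] by blast
qed

definition ee :: "nat \<Rightarrow> real \<Rightarrow> real" where
  "ee p r = (\<Sum>k. r^k * inverse (real k ^ p))"

lemma ee_sums:
  assumes "p \<ge> 2" "0 \<le> r" "r \<le> 1"
  shows "(\<lambda>k. r^k * inverse (real k ^ p)) sums ee p r"
proof -
  have "summable (\<lambda>k. r^k * inverse (real k ^ p))"
  proof (rule summable_comparison_test[OF _ inverse_power_summable[OF assms(1)]])
    show "\<exists>N. \<forall>k\<ge>N. norm (r^k * inverse (real k ^ p)) \<le> inverse (real k ^ p)"
      using assms by (intro exI[of _ 0] allI impI) (auto simp: abs_mult power_le_one intro!: mult_left_le_one_le)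
  qed
  thus ?thesis unfolding ee_def by (simp add: summable_sums)
qed

lemma ee_abel:
  assumes p: "p \<ge> 2"
  shows "(\<lambda>m. ee p (rr m)) \<longlonglongrightarrow> (\<Sum>k. inverse (real k ^ p))"
proof -
  have ul: "uniform_limit {0..1} (\<lambda>N r. \<Sum>k<N. r^k * inverse (real k ^ p))
              (\<lambda>r. \<Sum>k. r^k * inverse (real k ^ p)) sequentially"
  proof (rule Weierstrass_m_test[OF _ inverse_power_summable[OF p]])
    show "norm (r^k * inverse (real k ^ p)) \<le> inverse (real k ^ p)" if "r \<in> {0..1}" for k r
      using that by (auto simp: abs_mult power_le_one intro!: mult_left_le_one_le)
  qed
  have "continuous_on {0..1} (\<lambda>r. \<Sum>k. r^k * inverse (real k ^ p))"
    by (rule uniform_limit_theorem[OF _ ul]) (auto intro!: always_eventually continuous_intros)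
  hence "(\<lambda>m. (\<lambda>r. \<Sum>k. r^k * inverse (real k ^ p)) (rr m)) \<longlonglongrightarrow> (\<lambda>r. \<Sum>k. r^k * inverse (real k ^ p)) 1"
    using rr_bounds by (intro continuous_on_tendsto_compose[OF _ rr_lim]) (auto simp: less_imp_le)
  thus ?thesis by (simp add: ee_def)
qed

definition zr :: "nat \<Rightarrow> real" where "zr p = (\<Sum>k. inverse (real k ^ p))"

lemma I_formula:
  assumes n: "n \<ge> 1"
  shows "integral {0..1} (\<lambda>u. (u^n - u) * cot (pi * u)) =
           (\<Sum>j=1..(n-1) div 2. 2 * dco n j * zr (2*j+1))"
proof -
  let ?J = "{1..(n-1) div 2}"
  have eq: "integral {0..1} (\<lambda>u. (u^n - u) * Pk r u) = (\<Sum>j\<in>?J. 2 * dco n j * ee (2*j+1) r)"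
    if r: "0 < r" "r < 1" for r
  proof -
    have "(\<lambda>k. \<Sum>j\<in>?J. (2 * dco n j) * (r^k * inverse (real k ^ (2*j+1)))) sums
             (\<Sum>j\<in>?J. (2 * dco n j) * ee (2*j+1) r)"
      using r by (intro sums_sum sums_mult ee_sums) auto
    moreover have "(\<lambda>k. \<Sum>j\<in>?J. (2 * dco n j) * (r^k * inverse (real k ^ (2*j+1)))) =
                   (\<lambda>k. r^k * (2 * Sk n k))"
      by (simp add: Sk_def sum_distrib_left mult_ac)
    ultimately have "(\<lambda>k. r^k * (2 * Sk n k)) sums (\<Sum>j\<in>?J. (2 * dco n j) * ee (2*j+1) r)" by simp
    from sums_unique2[OF kernel_series[OF n r] this] show ?thesis .
  qed
  have L1: "(\<lambda>m. integral {0..1} (\<lambda>u. (u^n - u) * Pk (rr m) u)) \<longlonglongrightarrow>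
            integral {0..1} (\<lambda>u. (u^n - u) * cot (pi * u))"
    using kernel_limit[OF n] by simp
  have L2: "(\<lambda>m. integral {0..1} (\<lambda>u. (u^n - u) * Pk (rr m) u)) \<longlonglongrightarrow>
            (\<Sum>j\<in>?J. 2 * dco n j * zr (2*j+1))"
    unfolding eq[OF rr_bounds] zr_def by (intro tendsto_intros ee_abel) auto
  from LIMSEQ_unique[OF L1 L2] show ?thesis .
qed




lemma zeta_zr:
  assumes p: "p \<ge> 2"
  shows "zeta (of_nat p) = complex_of_real (zr p)"
proof -
  have s0: "(\<lambda>k. inverse (real k ^ p)) sums zr p"
    unfolding zr_def using inverse_power_summable[OF p, where 'a=real] by (simp add: summable_sums)
  have f0: "inverse (real 0 ^ p) = (0::real)" using p by simp
  have "(\<lambda>k. inverse (real (Suc k) ^ p)) sums zr p"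
    using sums_Suc_iff[of "\<lambda>k. inverse (real k ^ p)" "zr p"] s0 p by (simp add: power_0_left)
  hence "(\<lambda>k. complex_of_real (inverse (real (Suc k) ^ p))) sums complex_of_real (zr p)"
    by (rule sums_of_real)
  moreover have "complex_of_real (inverse (real (Suc k) ^ p)) = 1 / (of_nat (Suc k)) powr (of_nat p)" for k
    using p by (subst powr_nat') (simp_all add: divide_inverse)
  ultimately have "(\<lambda>k. 1 / (of_nat (Suc k) :: complex) powr (of_nat p)) sums complex_of_real (zr p)"
    by simp
  thus ?thesis unfolding zeta_def by (simp add: sums_iff)
qed

definition Iv :: "nat \<Rightarrow> real" where
  "Iv n = integral {0..1} (\<lambda>u. (u^n - u) * cot (pi * u))"

lemma summable_nfact:
  fixes x :: real
  shows "summable (\<lambda>n. x^n / fact n * real n)"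
proof (rule summable_comparison_test[OF _ summable_exp[of "2 * \<bar>x\<bar>"]])
  show "\<exists>N. \<forall>n\<ge>N. norm (x^n / fact n * real n) \<le> inverse (fact n) * (2 * \<bar>x\<bar>)^n"
  proof (intro exI[of _ 0] allI impI)
    fix n :: nat
    have "real n \<le> 2^n" using less_exp[of n] by (metis less_imp_le of_nat_less_numeral_power_cancel_iff of_nat_numeral)
    hence "\<bar>x\<bar>^n * real n \<le> \<bar>x\<bar>^n * 2^n" by (intro mult_left_mono) auto
    hence "\<bar>x\<bar>^n * real n / fact n \<le> \<bar>x\<bar>^n * 2^n / fact n" by (intro divide_right_mono) auto
    thus "norm (x^n / fact n * real n) \<le> inverse (fact n) * (2 * \<bar>x\<bar>)^n"
      by (simp add: abs_mult power_abs power_mult_distrib divide_inverse mult_ac)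
  qed
qed

lemma gen:
  fixes a :: "nat \<Rightarrow> complex" and h :: "real \<Rightarrow> complex"
  assumes a0: "a 0 = 0"
    and sa: "summable (\<lambda>n. norm (a n) * real n)"
    and hs: "\<And>u. u \<in> {0..1} \<Longrightarrow> (\<lambda>n. a n * of_real (u^n - u)) sums h u"
  shows "(\<lambda>u. h u * of_real (cot (pi*u))) integrable_on {0..1}"
        "(\<lambda>n. a n * of_real (Iv n)) sums integral {0..1} (\<lambda>u. h u * of_real (cot (pi*u)))"
proof -
  define g where "g n u = (u^n - u) * cot (pi * u)" for n u
  define G where "G N u = (\<Sum>n<N. a n * of_real (g n u))" for N u
  have gi: "((\<lambda>u. a n * of_real (g n u)) has_integral (a n * of_real (Iv n))) {0..1}" for n
  proof (cases "n = 0")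
    case True thus ?thesis using a0 by simp
  next
    case False
    hence "(g n) integrable_on {0..1}" using kernel_limit[of n] by (simp add: g_def[abs_def])
    hence "((g n) has_integral Iv n) {0..1}" by (simp add: Iv_def g_def[abs_def] has_integral_integral)
    thus ?thesis by (intro has_integral_mult_right has_integral_of_real)
  qed
  have Gi: "((G N) has_integral (\<Sum>n<N. a n * of_real (Iv n))) {0..1}" for N
    unfolding G_def by (intro has_integral_sum gi) auto
  have intG: "G N integrable_on {0..1}" for N using Gi by blast
  define B where "B = (\<Sum>n. norm (a n) * real n)"
  have hint: "(\<lambda>u::real. B) integrable_on {0..1}"
    by (rule integrable_continuous_interval) (intro continuous_intros)
  have le: "norm (G N u) \<le> B" if u: "u \<in> {0..1}" for N u
  proof -
    have "norm (G N u) \<le> (\<Sum>n<N. norm (a n * of_real (g n u)))" unfolding G_def by (rule norm_sum)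
    also have "\<dots> \<le> (\<Sum>n<N. norm (a n) * real n)"
    proof (intro sum_mono)
      fix n
      show "norm (a n * of_real (g n u)) \<le> norm (a n) * real n"
      proof (cases "n = 0")
        case True thus ?thesis using a0 by simp
      next
        case False
        have "\<bar>g n u\<bar> \<le> real n" using fbound[of u n] u False by (simp add: g_def)
        thus ?thesis by (simp add: norm_mult mult_left_mono)
      qed
    qed
    also have "\<dots> \<le> B" unfolding B_def using sa by (intro sum_le_suminf) auto
    finally show ?thesis .
  qed
  have conv: "(\<lambda>N. G N u) \<longlonglongrightarrow> h u * of_real (cot (pi*u))" if u: "u \<in> {0..1}" for u
  proof -
    have "(\<lambda>n. a n * of_real (u^n - u) * of_real (cot (pi*u))) sums (h u * of_real (cot (pi*u)))"
      by (intro sums_mult2 hs u)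
    moreover have e: "a n * of_real (g n u) = a n * of_real (u^n - u) * of_real (cot (pi*u))" for n
      by (simp only: g_def of_real_mult mult.assoc)
    moreover have "(\<lambda>N. G N u) = (\<lambda>N. \<Sum>n<N. a n * of_real (u^n - u) * of_real (cot (pi*u)))"
      unfolding G_def e ..
    ultimately show ?thesis by (simp only: sums_def)
  qed
  note dc = dominated_convergence[OF intG hint le conv]
  show "(\<lambda>u. h u * of_real (cot (pi*u))) integrable_on {0..1}" by (rule dc(1))
  have "(\<lambda>N. \<Sum>n<N. a n * of_real (Iv n)) \<longlonglongrightarrow> integral {0..1} (\<lambda>u. h u * of_real (cot (pi*u)))"
  proof -
    have "integral {0..1} (G N) = (\<Sum>n<N. a n * of_real (Iv n))" for N using Gi by (rule integral_unique)
    thus ?thesis using dc(2) by simp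
  qed
  thus "(\<lambda>n. a n * of_real (Iv n)) sums integral {0..1} (\<lambda>u. h u * of_real (cot (pi*u)))"
    by (simp add: sums_def)
qed

lemma reflect01:
  fixes g :: "real \<Rightarrow> complex"
  assumes "g integrable_on {0..1}"
  shows "integral {0..1} (\<lambda>u. g (1 - u)) = integral {0..1} g"
proof -
  have "(g has_integral integral {0..1} g) (cbox 0 1)" using assms by (simp add: has_integral_integral)
  from has_integral_affinity[OF this, of "-1" 1]
  have "((\<lambda>x. g (-1 *\<^sub>R x + 1)) has_integral integral {0..1} g) ((\<lambda>x. - x + 1) ` cbox 0 1)"
    by simp
  moreover have "(\<lambda>x::real. - x + 1) ` cbox 0 1 = {0..1}"
    by (auto simp: image_iff intro!: bexI[of _ "1 - _"])
  ultimately have "((\<lambda>x. g (1 - x)) has_integral integral {0..1} g) {0..1}" by simp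
  thus ?thesis by (rule integral_unique)
qed



lemma term_single:
  fixes c :: complex
  shows "(c^n /\<^sub>R fact n) * of_real (2 * dco n j * x) =
         - (1 / of_real pi) * c^n * ((-1)^j / (2 * of_real pi)^(2*j) / fact (n - 2*j) * of_real x)"
proof -
  have pi: "(of_real pi :: complex) \<noteq> 0" by simp
  have f1: "(fact n :: complex) \<noteq> 0" by simp
  have f2: "(fact (n - 2*j) :: complex) \<noteq> 0" by simp
  have eq: "of_real (2 * dco n j * x) =
        - (2 * ((-1)^j * fact n / (fact (n - 2*j) * ((2 * of_real pi)^(2*j) * (2 * of_real pi))))) * (of_real x :: complex)"
    by (simp add: dco_def power_add)
  show ?thesis unfolding eq using pi f1 f2 by (simp add: scaleR_conv_of_real field_simps)
qed

lemma term_eq: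
  fixes c :: complex
  shows "(c^n /\<^sub>R fact n) * of_real (\<Sum>j=1..k. 2 * dco n j * zr (2*j+1)) =
         - (1 / of_real pi) * c^n * (\<Sum>j=1..k. (-1)^j / (2 * of_real pi)^(2*j) / fact (n - 2*j) * zeta (of_nat (2*j+1)))"
proof -
  have "(c^n /\<^sub>R fact n) * of_real (\<Sum>j=1..k. 2 * dco n j * zr (2*j+1)) =
        (\<Sum>j=1..k. (c^n /\<^sub>R fact n) * of_real (2 * dco n j * zr (2*j+1)))"
    by (simp add: of_real_sum sum_distrib_left)
  also have "\<dots> = (\<Sum>j=1..k. - (1 / of_real pi) * c^n * ((-1)^j / (2 * of_real pi)^(2*j) / fact (n - 2*j) * zeta (of_nat (2*j+1))))"
  proof (intro sum.cong refl)
    fix j assume j: "j \<in> {1..k}"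
    have z: "zeta (of_nat (2*j+1)) = of_real (zr (2*j+1))" using j by (intro zeta_zr) auto
    show "(c^n /\<^sub>R fact n) * of_real (2 * dco n j * zr (2*j+1)) =
          - (1 / of_real pi) * c^n * ((-1)^j / (2 * of_real pi)^(2*j) / fact (n - 2*j) * zeta (of_nat (2*j+1)))"
      unfolding z by (rule term_single)
  qed
  also have "\<dots> = - (1 / of_real pi) * c^n * (\<Sum>j=1..k. (-1)^j / (2 * of_real pi)^(2*j) / fact (n - 2*j) * zeta (of_nat (2*j+1)))"
    by (simp add: sum_distrib_left)
  finally show ?thesis .
qed

lemma summable_coef:
  fixes a :: "nat \<Rightarrow> complex"
  assumes "\<And>n. norm (a n) \<le> norm c ^ n / fact n"
  shows "summable (\<lambda>n. norm (a n) * real n)"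
proof (rule summable_comparison_test[OF _ summable_nfact[of "norm c"]])
  show "\<exists>N. \<forall>n\<ge>N. norm (norm (a n) * real n) \<le> norm c ^ n / fact n * real n"
  proof (intro exI[of _ 0] allI impI)
    fix n :: nat
    have "norm (a n) * real n \<le> norm c ^ n / fact n * real n" by (rule mult_right_mono[OF assms]) simp
    thus "norm (norm (a n) * real n) \<le> norm c ^ n / fact n * real n" by simp
  qed
qed

lemma Iv_eq: "n \<ge> 1 \<Longrightarrow> Iv n = (\<Sum>j=1..(n-1) div 2. 2 * dco n j * zr (2*j+1))"
  unfolding Iv_def by (rule I_formula)

lemma cot_reflect: "cot (pi * (1 - u)) = - cot (pi * u)"
proof -
  have "pi * (1 - u) = pi - pi * u" by (simp add: algebra_simps)
  thus ?thesis by (simp add: cot_def sin_diff cos_diff)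
qed



theorem mainTheorem6:
  fixes c :: complex
  assumes "c \<noteq> 0" and "sinh c \<noteq> 0"
  defines "J \<equiv> integral {0..1::real}
             (\<lambda>u. (sinh (c * of_real u) / sinh c - of_real u) * of_real (cot (pi * u)))"
  shows "((\<lambda>k. - (1 / of_real pi) * c ^ (2*k+1) *
            (\<Sum>j=1..k. (-1) ^ j / (2 * of_real pi) ^ (2*j) / fact (2*k+1-2*j)
                         * zeta (of_nat (2*j+1))))
           sums (sinh c * J)) \<and>
         ((\<lambda>k. (1 / of_real pi) * c ^ (2*k+2) *
            (\<Sum>j=1..k. (-1) ^ j / (2 * of_real pi) ^ (2*j) / fact (2*k+2-2*j)
                         * zeta (of_nat (2*j+1))))
           sums ((1 - cosh c) * J)) \<and>
         ((\<lambda>k. (1 / of_real pi) *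
            (\<Sum>j=1..k. (-1) ^ j / (2 * of_real pi) ^ (2*j) * zeta (of_nat (2*j+1)) *
               (- (c ^ (2*k+1)) / fact (2*k+1-2*j) + c ^ (2*k+2) / fact (2*k+2-2*j))))
           sums (- (exp (- c) - 1) * J))"
proof -
  have sh: "sinh c \<noteq> 0" by (rule assms(2))
  define ct where "ct u = (of_real (cot (pi * u)) :: complex)" for u
  define F1 where "F1 u = sinh (c * of_real u) / sinh c - of_real u" for u :: real
  have J: "J = integral {0..1} (\<lambda>u. F1 u * ct u)" unfolding J_def F1_def ct_def ..
  define a1 where "a1 n = (if even n then 0 else c^n /\<^sub>R fact n)" for n
  define h1 where "h1 u = sinh (c * of_real u) - of_real u * sinh c" for u :: real
  have a10: "a1 0 = 0" by (simp add: a1_def)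
  have sa1: "summable (\<lambda>n. norm (a1 n) * real n)"
    by (rule summable_coef[of _ c]) (simp add: a1_def norm_power divide_inverse mult.commute)
  have hs1: "(\<lambda>n. a1 n * of_real (u^n - u)) sums h1 u" if "u \<in> {0..1}" for u
  proof -
    have "(\<lambda>n. (if even n then 0 else (c * of_real u) ^ n /\<^sub>R fact n) -
               (if even n then 0 else c ^ n /\<^sub>R fact n) * of_real u)
          sums (sinh (c * of_real u) - sinh c * of_real u)"
      by (intro sums_diff sums_mult2 sinh_converges)
    moreover have "(if even n then 0 else (c * of_real u) ^ n /\<^sub>R fact n) -
               (if even n then 0 else c ^ n /\<^sub>R fact n) * of_real u = a1 n * of_real (u^n - u)" for n
      by (cases "even n") (simp_all add: a1_def power_mult_distrib scaleR_conv_of_real algebra_simps)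
    ultimately show ?thesis by (simp add: h1_def mult.commute)
  qed
  note g1 = gen[OF a10 sa1 hs1]
  have eqJ1: "sinh c * J = integral {0..1} (\<lambda>u. h1 u * ct u)"
  proof -
    have "sinh c * J = integral {0..1} (\<lambda>u. sinh c * (F1 u * ct u))" unfolding J by simp
    also have "\<dots> = integral {0..1} (\<lambda>u. h1 u * ct u)"
      by (rule integral_cong) (use sh in \<open>simp add: F1_def h1_def field_simps\<close>)
    finally show ?thesis .
  qed
  have S1: "(\<lambda>m. a1 (2*m+1) * of_real (Iv (2*m+1))) sums (sinh c * J)"
  proof -
    have "(\<lambda>n. a1 n * of_real (Iv n)) sums (sinh c * J)" using g1(2) eqJ1 by (simp add: ct_def)
    moreover have "strict_mono (\<lambda>m::nat. 2*m+1)" by (simp add: strict_mono_def)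
    moreover have "a1 n * of_real (Iv n) = 0" if "n \<notin> range (\<lambda>m::nat. 2*m+1)" for n
    proof -
      have "even n"
      proof (rule ccontr)
        assume "odd n"
        then obtain m where "n = 2*m+1" by (rule oddE)
        with that show False by blast
      qed
      thus ?thesis by (simp add: a1_def)
    qed
    ultimately show ?thesis using sums_mono_reindex[of "\<lambda>m::nat. 2*m+1" "\<lambda>n. a1 n * of_real (Iv n)"] by simp
  qed
  have T1: "a1 (2*k+1) * of_real (Iv (2*k+1)) =
     - (1 / of_real pi) * c ^ (2*k+1) *
            (\<Sum>j=1..k. (-1) ^ j / (2 * of_real pi) ^ (2*j) / fact (2*k+1-2*j) * zeta (of_nat (2*j+1)))" for k
  proof -
    have e1: "Iv (2*k+1) = (\<Sum>j=1..k. 2 * dco (2*k+1) j * zr (2*j+1))" using Iv_eq[of "2*k+1"] by simp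
    have e2: "a1 (2*k+1) = c^(2*k+1) /\<^sub>R fact (2*k+1)" by (simp add: a1_def)
    show ?thesis unfolding e1 e2 by (rule term_eq)
  qed
  have P1: "(\<lambda>k. - (1 / of_real pi) * c ^ (2*k+1) *
            (\<Sum>j=1..k. (-1) ^ j / (2 * of_real pi) ^ (2*j) / fact (2*k+1-2*j) * zeta (of_nat (2*j+1))))
           sums (sinh c * J)"
    using S1 unfolding T1 .
  define a2 where "a2 n = (if even n then c^n /\<^sub>R fact n else 0) - (if n = 0 then 1 else 0)" for n
  define h2 where "h2 u = cosh (c * of_real u) - 1 - of_real u * (cosh c - 1)" for u :: real
  have a20: "a2 0 = 0" by (simp add: a2_def)
  have sa2: "summable (\<lambda>n. norm (a2 n) * real n)"
  proof -
    have "summable (\<lambda>n. norm (if even n then c^n /\<^sub>R fact n else 0) * real n)"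
      by (rule summable_coef[of _ c]) (simp add: norm_power divide_inverse mult.commute)
    moreover have "(\<lambda>n. norm (a2 n) * real n) = (\<lambda>n. norm (if even n then c^n /\<^sub>R fact n else 0) * real n)"
    proof (rule ext)
      fix n show "norm (a2 n) * real n = norm (if even n then c^n /\<^sub>R fact n else 0) * real n"
        by (cases "n = 0") (simp_all add: a2_def)
    qed
    ultimately show ?thesis by (simp only:)
  qed
  have hs2: "(\<lambda>n. a2 n * of_real (u^n - u)) sums h2 u" if "u \<in> {0..1}" for u
  proof -
    have "(\<lambda>n. ((if even n then (c * of_real u) ^ n /\<^sub>R fact n else 0) - (if n = 0 then 1 else 0)) -
               ((if even n then c ^ n /\<^sub>R fact n else 0) - (if n = 0 then 1 else 0)) * of_real u)
          sums ((cosh (c * of_real u) - 1) - (cosh c - 1) * of_real u)"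
      using sums_single[of 0 "\<lambda>_. 1::complex"]
      by (intro sums_diff sums_mult2 cosh_converges) auto
    moreover have "((if even n then (c * of_real u) ^ n /\<^sub>R fact n else 0) - (if n = 0 then 1 else 0)) -
               ((if even n then c ^ n /\<^sub>R fact n else 0) - (if n = 0 then 1 else 0)) * of_real u
             = a2 n * of_real (u^n - u)" for n
      by (cases "even n"; cases "n = 0") (simp_all add: a2_def power_mult_distrib scaleR_conv_of_real algebra_simps)
    ultimately show ?thesis by (simp add: h2_def mult.commute)
  qed
  note g2 = gen[OF a20 sa2 hs2]
  define K2 where "K2 = integral {0..1} (\<lambda>u. h2 u * ct u)"
  have S2: "(\<lambda>m. a2 (2*m+2) * of_real (Iv (2*m+2))) sums K2"
  proof -
    have "(\<lambda>n. a2 n * of_real (Iv n)) sums K2" using g2(2) by (simp add: ct_def K2_def)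
    moreover have "strict_mono (\<lambda>m::nat. 2*m+2)" by (simp add: strict_mono_def)
    moreover have "a2 n * of_real (Iv n) = 0" if "n \<notin> range (\<lambda>m::nat. 2*m+2)" for n
    proof (cases "n = 0")
      case True thus ?thesis by (simp add: a2_def)
    next
      case False
      have "odd n"
      proof
        assume "even n"
        then obtain m where "n = 2 * m" by (rule evenE)
        with False have "n = 2 * (m - 1) + 2" by simp
        with that show False by blast
      qed
      thus ?thesis using False by (simp add: a2_def)
    qed
    ultimately show ?thesis using sums_mono_reindex[of "\<lambda>m::nat. 2*m+2" "\<lambda>n. a2 n * of_real (Iv n)"] by simp
  qed
  have T2: "- (a2 (2*k+2) * of_real (Iv (2*k+2))) =
     (1 / of_real pi) * c ^ (2*k+2) *
            (\<Sum>j=1..k. (-1) ^ j / (2 * of_real pi) ^ (2*j) / fact (2*k+2-2*j) * zeta (of_nat (2*j+1)))" for k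
  proof -
    have e1: "Iv (2*k+2) = (\<Sum>j=1..k. 2 * dco (2*k+2) j * zr (2*j+1))" using Iv_eq[of "2*k+2"] by simp
    have e2: "a2 (2*k+2) = c^(2*k+2) /\<^sub>R fact (2*k+2)" by (simp add: a2_def)
    have "a2 (2*k+2) * of_real (Iv (2*k+2)) = - (1 / of_real pi) * c ^ (2*k+2) *
            (\<Sum>j=1..k. (-1) ^ j / (2 * of_real pi) ^ (2*j) / fact (2*k+2-2*j) * zeta (of_nat (2*j+1)))"
      unfolding e1 e2 by (rule term_eq)
    thus ?thesis by simp
  qed
  have refl: "(1 - cosh c) * J = - K2"
  proof -
    have i1: "(\<lambda>u. h1 u * ct u) integrable_on {0..1}" using g1(1) by (simp add: ct_def)
    have i2: "(\<lambda>u. h2 u * ct u) integrable_on {0..1}" using g2(1) by (simp add: ct_def)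
    have eF: "F1 u * ct u = (1 / sinh c) * (h1 u * ct u)" for u
      using sh by (simp add: F1_def h1_def field_simps)
    have iF: "(\<lambda>u. F1 u * ct u) integrable_on {0..1}"
      unfolding eF by (intro integrable_on_mult_right i1)
    have "J = integral {0..1} (\<lambda>u. F1 (1 - u) * ct (1 - u))"
      unfolding J by (rule reflect01[OF iF, symmetric])
    also have "\<dots> = integral {0..1} (\<lambda>u. - (h2 u * ct u) + cosh c * (F1 u * ct u))"
    proof (rule integral_cong)
      fix u :: real
      have c1: "ct (1 - u) = - ct u" by (simp add: ct_def cot_reflect)
      have s1: "sinh (c * of_real (1 - u)) = sinh c * cosh (c * of_real u) - cosh c * sinh (c * of_real u)"
        by (simp add: algebra_simps sinh_diff)
      show "F1 (1 - u) * ct (1 - u) = - (h2 u * ct u) + cosh c * (F1 u * ct u)"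
        unfolding c1 F1_def h2_def s1 using sh by (simp add: field_simps)
    qed
    also have "\<dots> = integral {0..1} (\<lambda>u. - (h2 u * ct u)) + integral {0..1} (\<lambda>u. cosh c * (F1 u * ct u))"
      by (rule integral_add) (intro integrable_neg i2, intro integrable_on_mult_right iF)
    also have "\<dots> = - K2 + cosh c * J"
      unfolding K2_def J using i2 by (simp add: integral_neg)
    finally have "J = - K2 + cosh c * J" .
    thus ?thesis by (simp add: algebra_simps)
  qed
  have P2: "(\<lambda>k. (1 / of_real pi) * c ^ (2*k+2) *
            (\<Sum>j=1..k. (-1) ^ j / (2 * of_real pi) ^ (2*j) / fact (2*k+2-2*j) * zeta (of_nat (2*j+1))))
           sums ((1 - cosh c) * J)"
    using sums_minus[OF S2] unfolding T2 refl .
  have P3: "(\<lambda>k. (1 / of_real pi) *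
            (\<Sum>j=1..k. (-1) ^ j / (2 * of_real pi) ^ (2*j) * zeta (of_nat (2*j+1)) *
               (- (c ^ (2*k+1)) / fact (2*k+1-2*j) + c ^ (2*k+2) / fact (2*k+2-2*j))))
           sums (- (exp (- c) - 1) * J)"
  proof -
    have "(\<lambda>k. - (1 / of_real pi) * c ^ (2*k+1) *
            (\<Sum>j=1..k. (-1) ^ j / (2 * of_real pi) ^ (2*j) / fact (2*k+1-2*j) * zeta (of_nat (2*j+1)))
            + (1 / of_real pi) * c ^ (2*k+2) *
            (\<Sum>j=1..k. (-1) ^ j / (2 * of_real pi) ^ (2*j) / fact (2*k+2-2*j) * zeta (of_nat (2*j+1))))
          sums (sinh c * J + (1 - cosh c) * J)"
      by (rule sums_add[OF P1 P2])
    moreover have "sinh c * J + (1 - cosh c) * J = - (exp (- c) - 1) * J"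
    proof -
      have "cosh c - sinh c = exp (- c)" by (rule cosh_minus_sinh)
      thus ?thesis by (simp add: algebra_simps)
    qed
    moreover have "- (1 / of_real pi) * c ^ (2*k+1) *
            (\<Sum>j=1..k. (-1) ^ j / (2 * of_real pi) ^ (2*j) / fact (2*k+1-2*j) * zeta (of_nat (2*j+1)))
            + (1 / of_real pi) * c ^ (2*k+2) *
            (\<Sum>j=1..k. (-1) ^ j / (2 * of_real pi) ^ (2*j) / fact (2*k+2-2*j) * zeta (of_nat (2*j+1)))
          = (1 / of_real pi) *
            (\<Sum>j=1..k. (-1) ^ j / (2 * of_real pi) ^ (2*j) * zeta (of_nat (2*j+1)) *
               (- (c ^ (2*k+1)) / fact (2*k+1-2*j) + c ^ (2*k+2) / fact (2*k+2-2*j)))" for k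
      by (simp add: sum_distrib_left sum_negf[symmetric] sum.distrib[symmetric] algebra_simps)
    ultimately show ?thesis by simp
  qed
  show ?thesis using P1 P2 P3 by blast
qed


end
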